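(* Let $k$ be an algebraically closed field with $\operatorname{char}(k)\nmid(d+1)!$, $S=k[x_1,\dots,x_n]$, $\mathcal{D}=k[z_1,\dots,z_n]$, with the apolarity action $\mathcal{D}\times S\to S$, $F\circ g=F(\partial/\partial x_1,\dots,\partial/\partial x_n)\,g$. For $f\in S_{d+1}$, the apolar ideal $f^{\perp}=\{F\in\mathcal{D}\mid F\circ f=0\}$ has a minimal generator in degree $d+1$ if and only if there exists $g\in S_{d+1}$, not a scalar multiple of $f$, such that $\langle\nabla g\rangle\subset\langle\nabla f\rangle$.
   Context: $\langle\nabla f\rangle$ denotes the $k$-span of $\partial f/\partial x_1,\dots,\partial f/\partial x_n$ in $S_d$. *)

theory Defs
  imports "HOL-Computational_Algebra.Polynomial" "HOL-Library.Poly_Mapping"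
begin

text \<open>Both S = k[x_1..x_n] and
  D = k[z_1..z_n] are modelled as the polynomials whose monomials only involve the
  variables with index < n.\<close>

type_synonym 'a mpoly = "(nat \<Rightarrow>\<^sub>0 nat) \<Rightarrow>\<^sub>0 'a"

definition mono_deg :: "(nat \<Rightarrow>\<^sub>0 nat) \<Rightarrow> nat" where
  "mono_deg \<alpha> = (\<Sum>i\<in>Poly_Mapping.keys \<alpha>. Poly_Mapping.lookup \<alpha> i)"

definition polyring :: "nat \<Rightarrow> 'a::zero mpoly set" where
  "polyring n = {p. \<forall>\<alpha>\<in>Poly_Mapping.keys p. Poly_Mapping.keys \<alpha> \<subseteq> {..<n}}"

definition homog :: "nat \<Rightarrow> nat \<Rightarrow> 'a::zero mpoly set" where
  "homog n e = {p \<in> polyring n. \<forall>\<alpha>\<in>Poly_Mapping.keys p. mono_deg \<alpha> = e}"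

definition mp_const :: "'a::zero \<Rightarrow> 'a mpoly" where
  "mp_const c = Poly_Mapping.single 0 c"

definition mp_smult :: "'a::semiring_0 \<Rightarrow> 'a mpoly \<Rightarrow> 'a mpoly" where
  "mp_smult c p = mp_const c * p"

definition var :: "nat \<Rightarrow> 'a::{zero,one} mpoly" where
  "var i = Poly_Mapping.single (Poly_Mapping.single i 1) 1"

definition pderiv_mp :: "nat \<Rightarrow> 'a::comm_semiring_1 mpoly \<Rightarrow> 'a mpoly" where
  "pderiv_mp i p = (\<Sum>\<alpha>\<in>Poly_Mapping.keys p.
      Poly_Mapping.single (\<alpha> - Poly_Mapping.single i 1) (of_nat (Poly_Mapping.lookup \<alpha> i) * Poly_Mapping.lookup p \<alpha>))"

definition diff_op :: "nat \<Rightarrow> (nat \<Rightarrow>\<^sub>0 nat) \<Rightarrow> 'a::comm_semiring_1 mpoly \<Rightarrow> 'a mpoly" where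
  "diff_op n \<beta> g = foldr (\<lambda>i h. (pderiv_mp i ^^ Poly_Mapping.lookup \<beta> i) h) [0..<n] g"

definition apolar :: "nat \<Rightarrow> 'a::comm_semiring_1 mpoly \<Rightarrow> 'a mpoly \<Rightarrow> 'a mpoly" where
  "apolar n F g = (\<Sum>\<beta>\<in>Poly_Mapping.keys F. mp_smult (Poly_Mapping.lookup F \<beta>) (diff_op n \<beta> g))"

definition apolar_ideal :: "nat \<Rightarrow> 'a::comm_semiring_1 mpoly \<Rightarrow> 'a mpoly set" where
  "apolar_ideal n f = {F \<in> polyring n. apolar n F f = 0}"

definition max_ideal_times :: "nat \<Rightarrow> 'a::comm_semiring_1 mpoly set \<Rightarrow> 'a mpoly set" where
  "max_ideal_times n I = {(\<Sum>i<n. var i * G i) | G. \<forall>i<n. G i \<in> I}"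

text \<open>A homogeneous ideal I has a minimal generator in degree e iff (I / m I)_e \<noteq> 0.\<close>
definition has_min_gen_in_degree :: "nat \<Rightarrow> 'a::comm_semiring_1 mpoly set \<Rightarrow> nat \<Rightarrow> bool" where
  "has_min_gen_in_degree n I e = (\<exists>F\<in>I. F \<in> homog n e \<and> F \<notin> max_ideal_times n I)"

definition grad_span :: "nat \<Rightarrow> 'a::comm_semiring_1 mpoly \<Rightarrow> 'a mpoly set" where
  "grad_span n f = {(\<Sum>i<n. mp_smult (c i) (pderiv_mp i f)) | c. True}"

end

theory Submission
  imports Defs
begin


lemma lookup_mp_smult: "Poly_Mapping.lookup (mp_smult c p) g = c * Poly_Mapping.lookup p g"
  unfolding mp_smult_def mp_const_def
  by (simp add: mult_map_scale_conv_mult[symmetric] map.rep_eq when_def)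

lemma sum_singles: "(\<Sum>b\<in>Poly_Mapping.keys p. Poly_Mapping.single b (Poly_Mapping.lookup p b)) = p"
  by (rule poly_mapping_eqI) (auto simp: lookup_sum lookup_single when_def in_keys_iff)

lemma add_sub_single: "(g + Poly_Mapping.single i (1::nat)) - Poly_Mapping.single i 1 = g"
  by (rule poly_mapping_eqI) (simp add: lookup_add lookup_minus lookup_single)

lemma sub_add_single: "Poly_Mapping.lookup a i \<noteq> 0 \<Longrightarrow> (a - Poly_Mapping.single i (1::nat)) + Poly_Mapping.single i 1 = a"
  by (rule poly_mapping_eqI) (auto simp: lookup_add lookup_minus lookup_single when_def)

lemma lookup_pderiv:
  fixes p :: "'a::comm_semiring_1 mpoly"
  shows "Poly_Mapping.lookup (pderiv_mp i p) g = of_nat (Suc (Poly_Mapping.lookup g i)) * Poly_Mapping.lookup p (g + Poly_Mapping.single i 1)"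
proof -
  have "Poly_Mapping.lookup (pderiv_mp i p) g = (\<Sum>a\<in>Poly_Mapping.keys p. (of_nat (Poly_Mapping.lookup a i) * Poly_Mapping.lookup p a when a - Poly_Mapping.single i 1 = g))"
    by (simp add: pderiv_mp_def lookup_sum lookup_single)
  also have "\<dots> = (\<Sum>a\<in>Poly_Mapping.keys p. (if a = g + Poly_Mapping.single i 1 then of_nat (Suc (Poly_Mapping.lookup g i)) * Poly_Mapping.lookup p (g + Poly_Mapping.single i 1) else 0))"
  proof (rule sum.cong)
    fix a assume "a \<in> Poly_Mapping.keys p"
    show "(of_nat (Poly_Mapping.lookup a i) * Poly_Mapping.lookup p a when a - Poly_Mapping.single i 1 = g) =
      (if a = g + Poly_Mapping.single i 1 then of_nat (Suc (Poly_Mapping.lookup g i)) * Poly_Mapping.lookup p (g + Poly_Mapping.single i 1) else 0)"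
    proof (cases "a = g + Poly_Mapping.single i 1")
      case True then show ?thesis by (simp add: add_sub_single lookup_add)
    next
      case False
      have "Poly_Mapping.lookup a i = 0" if "a - Poly_Mapping.single i 1 = g"
        using False sub_add_single[of a i] that by auto
      then show ?thesis using False by (auto simp: when_def)
    qed
  qed simp
  also have "\<dots> = of_nat (Suc (Poly_Mapping.lookup g i)) * Poly_Mapping.lookup p (g + Poly_Mapping.single i 1)"
    by (auto simp: sum.delta in_keys_iff)
  finally show ?thesis .
qed

fun rp :: "nat \<Rightarrow> nat \<Rightarrow> nat" where
  "rp a 0 = 1" | "rp a (Suc k) = Suc a * rp (Suc a) k"

lemma rp_fact: "rp a k * fact a = fact (a + k)"
proof (induction k arbitrary: a)
  case 0 then show ?case by simp
next
  case (Suc k)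
  have "rp a (Suc k) * fact a = rp (Suc a) k * fact (Suc a)" by (simp add: algebra_simps)
  also have "\<dots> = fact (a + Suc k)" using Suc.IH[of "Suc a"] by simp
  finally show ?case .
qed

lemma rp0: "rp 0 k = fact k" using rp_fact[of 0 k] by simp
lemma rp1: "rp (Suc 0) k = Suc k * fact k" using rp_fact[of 1 k] by simp

lemma lookup_pderiv_pow:
  fixes p :: "'a::comm_semiring_1 mpoly"
  shows "Poly_Mapping.lookup ((pderiv_mp i ^^ k) p) g = of_nat (rp (Poly_Mapping.lookup g i) k) * Poly_Mapping.lookup p (g + Poly_Mapping.single i k)"
proof (induction k arbitrary: g)
  case 0 show ?case by simp
next
  case (Suc k)
  have "Poly_Mapping.lookup ((pderiv_mp i ^^ Suc k) p) g = of_nat (Suc (Poly_Mapping.lookup g i)) * Poly_Mapping.lookup ((pderiv_mp i ^^ k) p) (g + Poly_Mapping.single i 1)"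
    by (simp add: lookup_pderiv)
  also have "\<dots> = of_nat (Suc (Poly_Mapping.lookup g i)) * (of_nat (rp (Suc (Poly_Mapping.lookup g i)) k) * Poly_Mapping.lookup p (g + Poly_Mapping.single i 1 + Poly_Mapping.single i k))"
    by (simp add: Suc lookup_add)
  also have "g + Poly_Mapping.single i 1 + Poly_Mapping.single i k = g + Poly_Mapping.single i (Suc k)"
    by (simp add: add.assoc single_add[symmetric])
  finally show ?case by (simp add: algebra_simps)
qed

lemma lookup_foldr:
  fixes p :: "'a::comm_semiring_1 mpoly"
  shows "distinct xs \<Longrightarrow> Poly_Mapping.lookup (foldr (\<lambda>i h. (pderiv_mp i ^^ Poly_Mapping.lookup b i) h) xs p) g
    = of_nat (\<Prod>i\<in>set xs. rp (Poly_Mapping.lookup g i) (Poly_Mapping.lookup b i)) * Poly_Mapping.lookup p (g + (\<Sum>i\<in>set xs. Poly_Mapping.single i (Poly_Mapping.lookup b i)))"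
proof (induction xs arbitrary: g)
  case Nil then show ?case by simp
next
  case (Cons x xs)
  have nx: "x \<notin> set xs" and d: "distinct xs" using Cons.prems by auto
  have "Poly_Mapping.lookup (foldr (\<lambda>i h. (pderiv_mp i ^^ Poly_Mapping.lookup b i) h) (x # xs) p) g
     = of_nat (rp (Poly_Mapping.lookup g x) (Poly_Mapping.lookup b x)) * Poly_Mapping.lookup (foldr (\<lambda>i h. (pderiv_mp i ^^ Poly_Mapping.lookup b i) h) xs p) (g + Poly_Mapping.single x (Poly_Mapping.lookup b x))"
    by (simp add: lookup_pderiv_pow)
  also have "\<dots> = of_nat (rp (Poly_Mapping.lookup g x) (Poly_Mapping.lookup b x)) * (of_nat (\<Prod>i\<in>set xs. rp (Poly_Mapping.lookup (g + Poly_Mapping.single x (Poly_Mapping.lookup b x)) i) (Poly_Mapping.lookup b i)) * Poly_Mapping.lookup p (g + Poly_Mapping.single x (Poly_Mapping.lookup b x) + (\<Sum>i\<in>set xs. Poly_Mapping.single i (Poly_Mapping.lookup b i))))"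
    by (simp add: Cons.IH[OF d])
  also have "(\<Prod>i\<in>set xs. rp (Poly_Mapping.lookup (g + Poly_Mapping.single x (Poly_Mapping.lookup b x)) i) (Poly_Mapping.lookup b i)) = (\<Prod>i\<in>set xs. rp (Poly_Mapping.lookup g i) (Poly_Mapping.lookup b i))"
    by (rule prod.cong) (use nx in \<open>auto simp: lookup_add lookup_single when_def\<close>)
  finally show ?case using nx by (simp add: add.assoc mult.assoc)
qed

lemma sum_singles_n:
  fixes b :: "nat \<Rightarrow>\<^sub>0 nat"
  assumes "Poly_Mapping.keys b \<subseteq> {..<n}"
  shows "(\<Sum>i<n. Poly_Mapping.single i (Poly_Mapping.lookup b i)) = b"
proof (rule poly_mapping_eqI)
  fix k
  show "Poly_Mapping.lookup (\<Sum>i<n. Poly_Mapping.single i (Poly_Mapping.lookup b i)) k = Poly_Mapping.lookup b k"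
  proof (cases "k < n")
    case True
    have "(\<Sum>x<n. if x = k then Poly_Mapping.lookup b x else 0) = Poly_Mapping.lookup b k"
      using sum.delta[of "{..<n}" k "Poly_Mapping.lookup b"] True by simp
    then show ?thesis by (simp add: lookup_sum lookup_single when_def)
  next
    case False
    then have "Poly_Mapping.lookup b k = 0" using assms by (auto simp: in_keys_iff)
    then show ?thesis using False by (simp add: lookup_sum lookup_single when_def sum.delta)
  qed
qed

definition R :: "nat \<Rightarrow> (nat \<Rightarrow>\<^sub>0 nat) \<Rightarrow> (nat \<Rightarrow>\<^sub>0 nat) \<Rightarrow> nat" where
  "R n g b = (\<Prod>i<n. rp (Poly_Mapping.lookup g i) (Poly_Mapping.lookup b i))"

lemma lookup_diff_op:
  fixes p :: "'a::comm_semiring_1 mpoly"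
  assumes "Poly_Mapping.keys b \<subseteq> {..<n}"
  shows "Poly_Mapping.lookup (diff_op n b p) g = of_nat (R n g b) * Poly_Mapping.lookup p (g + b)"
  using lookup_foldr[of "[0..<n]" b p g] sum_singles_n[OF assms]
  by (simp add: diff_op_def R_def atLeast0LessThan)

lemma lookup_apolar0:
  fixes p :: "'a::comm_semiring_1 mpoly"
  assumes "H \<in> polyring n"
  shows "Poly_Mapping.lookup (apolar n H p) g = (\<Sum>b\<in>Poly_Mapping.keys H. Poly_Mapping.lookup H b * of_nat (R n g b) * Poly_Mapping.lookup p (g + b))"
  using assms by (auto simp: apolar_def lookup_sum lookup_mp_smult polyring_def lookup_diff_op mult.assoc intro!: sum.cong)

lemma lookup_apolar:
  fixes p :: "'a::comm_semiring_1 mpoly"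
  assumes "H \<in> polyring n" "finite A" "Poly_Mapping.keys H \<subseteq> A"
  shows "Poly_Mapping.lookup (apolar n H p) g = (\<Sum>b\<in>A. Poly_Mapping.lookup H b * of_nat (R n g b) * Poly_Mapping.lookup p (g + b))"
  unfolding lookup_apolar0[OF assms(1)]
  by (rule sum.mono_neutral_left) (use assms in \<open>auto simp: in_keys_iff\<close>)

lemma mono_deg_sum: "finite A \<Longrightarrow> Poly_Mapping.keys a \<subseteq> A \<Longrightarrow> mono_deg a = (\<Sum>i\<in>A. Poly_Mapping.lookup a i)"
  unfolding mono_deg_def by (rule sum.mono_neutral_left) (auto simp: in_keys_iff)

lemma mono_deg_add: "mono_deg (a + b) = mono_deg a + mono_deg b"
proof -
  let ?A = "Poly_Mapping.keys a \<union> Poly_Mapping.keys b"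
  have "mono_deg (a + b) = (\<Sum>i\<in>?A. Poly_Mapping.lookup (a + b) i)"
    using keys_add[of a b] by (intro mono_deg_sum) auto
  also have "\<dots> = (\<Sum>i\<in>?A. Poly_Mapping.lookup a i) + (\<Sum>i\<in>?A. Poly_Mapping.lookup b i)"
    by (simp add: lookup_add sum.distrib)
  also have "\<dots> = mono_deg a + mono_deg b"
    by (simp add: mono_deg_sum[symmetric])
  finally show ?thesis .
qed

lemma mono_deg_single: "mono_deg (Poly_Mapping.single i k) = k"
  by (simp add: mono_deg_def)

lemma keys_le_add: "Poly_Mapping.keys (a::nat \<Rightarrow>\<^sub>0 nat) \<subseteq> Poly_Mapping.keys (a + b)"
  by (auto simp: in_keys_iff lookup_add)

lemma mono_deg_zero: "mono_deg a = 0 \<Longrightarrow> a = 0"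
  unfolding mono_deg_def by (auto simp: in_keys_iff intro: poly_mapping_eqI)

lemma mono_deg_one:
  assumes "mono_deg a = 1"
  shows "\<exists>j\<in>Poly_Mapping.keys a. a = Poly_Mapping.single j 1"
proof -
  have "Poly_Mapping.keys a \<noteq> {}"
  proof
    assume "Poly_Mapping.keys a = {}"
    then have "mono_deg a = 0" by (simp add: mono_deg_def)
    with assms show False by simp
  qed
  then obtain j where j: "j \<in> Poly_Mapping.keys a" by blast
  have "mono_deg a = Poly_Mapping.lookup a j + (\<Sum>i\<in>Poly_Mapping.keys a - {j}. Poly_Mapping.lookup a i)"
    unfolding mono_deg_def using j by (simp add: sum.remove)
  moreover have "Poly_Mapping.lookup a j \<noteq> 0" using j by (simp add: in_keys_iff)
  ultimately have s: "Poly_Mapping.lookup a j + (\<Sum>i\<in>Poly_Mapping.keys a - {j}. Poly_Mapping.lookup a i) = 1"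
    and nz: "Poly_Mapping.lookup a j \<noteq> 0" using assms by auto
  from s nz have aj: "Poly_Mapping.lookup a j = 1" by linarith
  from s nz have rest: "(\<Sum>i\<in>Poly_Mapping.keys a - {j}. Poly_Mapping.lookup a i) = 0" by linarith
  have "\<forall>i\<in>Poly_Mapping.keys a - {j}. Poly_Mapping.lookup a i = 0" using rest by simp
  then have "Poly_Mapping.keys a \<subseteq> {j}" by (auto simp: in_keys_iff)
  then have "a = Poly_Mapping.single j 1"
    by (intro poly_mapping_eqI) (auto simp: lookup_single when_def aj in_keys_iff)
  then show ?thesis using j by blast
qed

lemma homogD: "p \<in> homog n e \<Longrightarrow> b \<in> Poly_Mapping.keys p \<Longrightarrow> mono_deg b = e \<and> Poly_Mapping.keys b \<subseteq> {..<n}"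
  by (auto simp: homog_def polyring_def)

lemma homogI: "(\<And>b. b \<in> Poly_Mapping.keys p \<Longrightarrow> mono_deg b = e \<and> Poly_Mapping.keys b \<subseteq> {..<n}) \<Longrightarrow> p \<in> homog n e"
  by (auto simp: homog_def polyring_def)

lemma homog_polyring: "p \<in> homog n e \<Longrightarrow> p \<in> polyring n"
  by (auto simp: homog_def)

lemma apolar_supp:
  fixes p :: "'a::comm_semiring_1 mpoly"
  assumes H: "H \<in> homog n a" and p: "p \<in> homog n (a + e)" and nz: "Poly_Mapping.lookup (apolar n H p) g \<noteq> 0"
  shows "mono_deg g = e \<and> Poly_Mapping.keys g \<subseteq> {..<n}"
proof -
  from nz have "(\<Sum>b\<in>Poly_Mapping.keys H. Poly_Mapping.lookup H b * of_nat (R n g b) * Poly_Mapping.lookup p (g + b)) \<noteq> 0"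
    using lookup_apolar0[OF homog_polyring[OF H]] by simp
  then obtain b where b: "b \<in> Poly_Mapping.keys H" and t: "Poly_Mapping.lookup H b * of_nat (R n g b) * Poly_Mapping.lookup p (g + b) \<noteq> 0"
    using sum.not_neutral_contains_not_neutral by blast
  from t have "g + b \<in> Poly_Mapping.keys p" by (auto simp: in_keys_iff)
  from homogD[OF p this] homogD[OF H b] show ?thesis
    using keys_le_add[of g b] by (auto simp: mono_deg_add)
qed

definition bf :: "nat \<Rightarrow> (nat \<Rightarrow>\<^sub>0 nat) \<Rightarrow> nat" where
  "bf n b = (\<Prod>i<n. fact (Poly_Mapping.lookup b i))"

definition P :: "nat \<Rightarrow> 'a::comm_semiring_1 mpoly \<Rightarrow> 'a mpoly \<Rightarrow> 'a" where
  "P n H p = (\<Sum>b\<in>Poly_Mapping.keys H. Poly_Mapping.lookup H b * of_nat (bf n b) * Poly_Mapping.lookup p b)"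

lemma P_superset: "finite A \<Longrightarrow> Poly_Mapping.keys H \<subseteq> A \<Longrightarrow> P n H p = (\<Sum>b\<in>A. Poly_Mapping.lookup H b * of_nat (bf n b) * Poly_Mapping.lookup p b)"
  unfolding P_def by (rule sum.mono_neutral_left) (auto simp: in_keys_iff)

lemma P_superset2:
  assumes "finite A" "Poly_Mapping.keys p \<subseteq> A"
  shows "P n H p = (\<Sum>b\<in>A. Poly_Mapping.lookup H b * of_nat (bf n b) * Poly_Mapping.lookup p b)"
proof -
  have "P n H p = (\<Sum>b\<in>A \<union> Poly_Mapping.keys H. Poly_Mapping.lookup H b * of_nat (bf n b) * Poly_Mapping.lookup p b)"
    using assms by (intro P_superset) auto
  also have "\<dots> = (\<Sum>b\<in>A. Poly_Mapping.lookup H b * of_nat (bf n b) * Poly_Mapping.lookup p b)"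
  proof (intro sum.mono_neutral_right)
    show "\<forall>i\<in>A \<union> Poly_Mapping.keys H - A. Poly_Mapping.lookup H i * of_nat (bf n i) * Poly_Mapping.lookup p i = 0"
      using assms(2) by (metis DiffD2 in_keys_iff mult_zero_right subsetD)
  qed (use assms in auto)
  finally show ?thesis .
qed

lemma P_sym: "P n H p = P n p H"
  using P_superset[of "Poly_Mapping.keys H \<union> Poly_Mapping.keys p" H n p] P_superset[of "Poly_Mapping.keys H \<union> Poly_Mapping.keys p" p n H]
  by (simp add: ac_simps)

lemma R0: "R n 0 b = bf n b"
  by (simp add: R_def bf_def rp0)

lemma lookup_apolar_zero: "H \<in> polyring n \<Longrightarrow> Poly_Mapping.lookup (apolar n H p) 0 = P n H p"
  by (simp add: lookup_apolar0 R0 P_def)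

lemma P_add_left: "P n (H1 + H2) p = P n H1 p + P n H2 p"
proof -
  let ?A = "Poly_Mapping.keys H1 \<union> Poly_Mapping.keys H2"
  show ?thesis
    using P_superset[of ?A "H1 + H2" n p] P_superset[of ?A H1 n p] P_superset[of ?A H2 n p] keys_add[of H1 H2]
    by (simp add: lookup_add distrib_right sum.distrib)
qed

lemma keys_mp_smult: "Poly_Mapping.keys (mp_smult c H) \<subseteq> Poly_Mapping.keys H"
  by (auto simp: in_keys_iff lookup_mp_smult)

lemma P_smult_left: "P n (mp_smult c H) p = c * P n H p"
  using P_superset[of "Poly_Mapping.keys H" "mp_smult c H" n p] keys_mp_smult[of c H]
  by (simp add: lookup_mp_smult sum_distrib_left P_def ac_simps)

lemma P_add_right: "P n H (p1 + p2) = P n H p1 + P n H p2"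
  by (simp add: P_def lookup_add distrib_left sum.distrib)

lemma P_smult_right: "P n H (mp_smult c p) = c * P n H p"
  by (simp add: P_def lookup_mp_smult sum_distrib_left ac_simps)

lemma P_zero_left: "P n 0 p = 0" by (simp add: P_def)
lemma P_zero_right: "P n H 0 = 0" by (simp add: P_def)

lemma P_sum_left: "finite I \<Longrightarrow> P n (\<Sum>i\<in>I. H i) p = (\<Sum>i\<in>I. P n (H i) p)"
  by (induction I rule: finite_induct) (simp_all add: P_zero_left P_add_left)

lemma P_sum_right: "finite I \<Longrightarrow> P n H (\<Sum>i\<in>I. p i) = (\<Sum>i\<in>I. P n H (p i))"
  by (induction I rule: finite_induct) (simp_all add: P_zero_right P_add_right)

lemma P_single: "P n (Poly_Mapping.single a c) p = c * of_nat (bf n a) * Poly_Mapping.lookup p a"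
  by (simp add: P_def)

lemma bf_add_single:
  assumes "i < n"
  shows "bf n (Poly_Mapping.single i 1 + b) = Suc (Poly_Mapping.lookup b i) * bf n b"
proof -
  have "bf n (Poly_Mapping.single i 1 + b) = fact (Suc (Poly_Mapping.lookup b i)) * (\<Prod>k\<in>{..<n} - {i}. fact (Poly_Mapping.lookup (Poly_Mapping.single i 1 + b) k))"
    unfolding bf_def using assms by (simp add: prod.remove lookup_add)
  also have "(\<Prod>k\<in>{..<n} - {i}. fact (Poly_Mapping.lookup (Poly_Mapping.single i 1 + b) k)) = (\<Prod>k\<in>{..<n} - {i}. fact (Poly_Mapping.lookup b k))"
    by (rule prod.cong) (auto simp: lookup_add lookup_single)
  also have "bf n b = fact (Poly_Mapping.lookup b i) * (\<Prod>k\<in>{..<n} - {i}. fact (Poly_Mapping.lookup b k))"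
    unfolding bf_def using assms by (simp add: prod.remove)
  ultimately show ?thesis by (simp add: algebra_simps)
qed

lemma R_single:
  assumes "j < n"
  shows "R n (Poly_Mapping.single j 1) b = Suc (Poly_Mapping.lookup b j) * bf n b"
proof -
  have "R n (Poly_Mapping.single j 1) b = rp 1 (Poly_Mapping.lookup b j) * (\<Prod>k\<in>{..<n} - {j}. rp (Poly_Mapping.lookup (Poly_Mapping.single j (1::nat)) k) (Poly_Mapping.lookup b k))"
    unfolding R_def using assms by (simp add: prod.remove)
  also have "(\<Prod>k\<in>{..<n} - {j}. rp (Poly_Mapping.lookup (Poly_Mapping.single j (1::nat)) k) (Poly_Mapping.lookup b k)) = (\<Prod>k\<in>{..<n} - {j}. fact (Poly_Mapping.lookup b k))"
    by (rule prod.cong) (auto simp: lookup_single rp0)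
  also have "bf n b = fact (Poly_Mapping.lookup b j) * (\<Prod>k\<in>{..<n} - {j}. fact (Poly_Mapping.lookup b k))"
    unfolding bf_def using assms by (simp add: prod.remove)
  ultimately show ?thesis by (simp add: rp1 algebra_simps)
qed

lemma var_mult: "var i * (G::'a::comm_semiring_1 mpoly) = (\<Sum>b\<in>Poly_Mapping.keys G. Poly_Mapping.single (Poly_Mapping.single i 1 + b) (Poly_Mapping.lookup G b))"
proof -
  have "var i * G = var i * (\<Sum>b\<in>Poly_Mapping.keys G. Poly_Mapping.single b (Poly_Mapping.lookup G b))" by (simp add: sum_singles)
  also have "\<dots> = (\<Sum>b\<in>Poly_Mapping.keys G. Poly_Mapping.single (Poly_Mapping.single i 1 + b) (Poly_Mapping.lookup G b))"
    by (simp add: var_def sum_distrib_left mult_single)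
  finally show ?thesis .
qed

lemma P_var:
  fixes G p :: "'a::comm_semiring_1 mpoly"
  assumes "i < n"
  shows "P n (var i * G) p = P n G (pderiv_mp i p)"
proof -
  have "P n (var i * G) p = (\<Sum>b\<in>Poly_Mapping.keys G. Poly_Mapping.lookup G b * of_nat (bf n (Poly_Mapping.single i 1 + b)) * Poly_Mapping.lookup p (Poly_Mapping.single i 1 + b))"
    by (simp add: var_mult P_sum_left P_single)
  also have "\<dots> = P n G (pderiv_mp i p)"
    unfolding P_def lookup_pderiv bf_add_single[OF assms]
    by (rule sum.cong) (simp_all add: lookup_add algebra_simps)
  finally show ?thesis .
qed

lemma lookup_apolar_single:
  fixes G p :: "'a::comm_semiring_1 mpoly"
  assumes "G \<in> polyring n" "j < n"
  shows "Poly_Mapping.lookup (apolar n G p) (Poly_Mapping.single j 1) = P n G (pderiv_mp j p)"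
  unfolding lookup_apolar0[OF assms(1)] P_def lookup_pderiv R_single[OF assms(2)]
  by (rule sum.cong) (simp_all add: algebra_simps)

lemma pderiv_homog:
  fixes p :: "'a::comm_semiring_1 mpoly"
  assumes "p \<in> homog n (Suc e)"
  shows "pderiv_mp i p \<in> homog n e"
proof (rule homogI)
  fix b assume "b \<in> Poly_Mapping.keys (pderiv_mp i p)"
  then have "b + Poly_Mapping.single i 1 \<in> Poly_Mapping.keys p" by (auto simp: in_keys_iff lookup_pderiv)
  from homogD[OF assms this] have "mono_deg b = e" and k: "Poly_Mapping.keys (b + Poly_Mapping.single i 1) \<subseteq> {..<n}"
    by (simp_all add: mono_deg_add mono_deg_single)
  then show "mono_deg b = e \<and> Poly_Mapping.keys b \<subseteq> {..<n}"
    using keys_le_add[of b "Poly_Mapping.single i 1"] by blast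
qed

lemma var_homog:
  fixes G :: "'a::comm_semiring_1 mpoly"
  assumes "G \<in> homog n e" "i < n"
  shows "var i * G \<in> homog n (Suc e)"
proof (rule homogI)
  fix a assume "a \<in> Poly_Mapping.keys (var i * G)"
  then have "a \<in> Poly_Mapping.keys (\<Sum>b\<in>Poly_Mapping.keys G. Poly_Mapping.single (Poly_Mapping.single i 1 + b) (Poly_Mapping.lookup G b))"
    by (simp only: var_mult)
  then have "a \<in> (\<Union>b\<in>Poly_Mapping.keys G. Poly_Mapping.keys (Poly_Mapping.single (Poly_Mapping.single i 1 + b) (Poly_Mapping.lookup G b)))"
    by (rule subsetD[OF keys_sum])
  then obtain b where b: "b \<in> Poly_Mapping.keys G" and a: "a \<in> Poly_Mapping.keys (Poly_Mapping.single (Poly_Mapping.single i 1 + b) (Poly_Mapping.lookup G b))"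
    by (rule UN_E)
  from a have ae: "a = Poly_Mapping.single i 1 + b" by (simp split: if_splits)
  from homogD[OF assms(1) b] have db: "mono_deg b = e" and kb: "Poly_Mapping.keys b \<subseteq> {..<n}" by auto
  have "mono_deg a = Suc e" using ae db by (simp add: mono_deg_add mono_deg_single)
  moreover have "Poly_Mapping.keys a \<subseteq> {..<n}"
  proof -
    have k1: "Poly_Mapping.keys a \<subseteq> Poly_Mapping.keys (Poly_Mapping.single i (1::nat)) \<union> Poly_Mapping.keys b"
      unfolding ae by (rule keys_add)
    have k2: "Poly_Mapping.keys (Poly_Mapping.single i (1::nat)) \<union> Poly_Mapping.keys b \<subseteq> {..<n}"
      using kb assms(2) by simp
    show ?thesis using k1 k2 by (rule subset_trans)
  qed
  ultimately show "mono_deg a = Suc e \<and> Poly_Mapping.keys a \<subseteq> {..<n}" by blast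
qed

lemma mp_smult_add_left: "mp_smult (a + b) x = mp_smult a x + mp_smult b x"
  by (rule poly_mapping_eqI) (simp add: lookup_mp_smult lookup_add algebra_simps)
lemma mp_smult_add_right: "mp_smult a (x + y) = mp_smult a x + mp_smult a y"
  by (rule poly_mapping_eqI) (simp add: lookup_mp_smult lookup_add algebra_simps)
lemma mp_smult_smult: "mp_smult a (mp_smult b x) = mp_smult (a * b) x"
  by (rule poly_mapping_eqI) (simp add: lookup_mp_smult algebra_simps)
lemma mp_smult_one: "mp_smult 1 (x::'a::comm_semiring_1 mpoly) = x"
  by (rule poly_mapping_eqI) (simp add: lookup_mp_smult)
lemma mp_smult_zero: "mp_smult 0 x = 0"
  by (rule poly_mapping_eqI) (simp add: lookup_mp_smult)
lemma mp_smult_zero_right: "mp_smult c 0 = 0"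
  by (rule poly_mapping_eqI) (simp add: lookup_mp_smult)
lemma mp_smult_single: "mp_smult (c::'a::comm_semiring_1) (Poly_Mapping.single b 1) = Poly_Mapping.single b c"
  by (rule poly_mapping_eqI) (simp add: lookup_mp_smult lookup_single when_def)

lemma vs_mp: "vector_space (mp_smult :: 'k::field \<Rightarrow> 'k mpoly \<Rightarrow> 'k mpoly)"
  by unfold_locales (simp_all add: mp_smult_add_left mp_smult_add_right mp_smult_smult mp_smult_one)

lemma vs_k: "vector_space ((*) :: 'k::field \<Rightarrow> 'k \<Rightarrow> 'k)"
  by unfold_locales (simp_all add: algebra_simps)

lemma sep:
  fixes U :: "'k::field mpoly set"
  assumes U0: "0 \<in> U" and Uadd: "\<And>a b. a \<in> U \<Longrightarrow> b \<in> U \<Longrightarrow> a + b \<in> U"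
    and Usm: "\<And>c a. a \<in> U \<Longrightarrow> mp_smult c a \<in> U" and x: "x \<notin> U"
  shows "\<exists>\<phi>. (\<forall>a b. \<phi> (a + b) = \<phi> a + \<phi> b) \<and> (\<forall>c a. \<phi> (mp_smult c a) = c * \<phi> a)
     \<and> (\<forall>u\<in>U. \<phi> u = 0) \<and> \<phi> x = 1"
proof -
  interpret V: vector_space "mp_smult :: 'k \<Rightarrow> 'k mpoly \<Rightarrow> 'k mpoly" by (rule vs_mp)
  interpret VP: vector_space_pair "mp_smult :: 'k \<Rightarrow> 'k mpoly \<Rightarrow> 'k mpoly" "(*) :: 'k \<Rightarrow> 'k \<Rightarrow> 'k"
    by (simp add: vector_space_pair_def vs_mp vs_k)
  have sub: "V.subspace U" using U0 Uadd Usm by (intro V.subspaceI) auto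
  obtain B where B: "B \<subseteq> U" "V.independent B" "U \<subseteq> V.span B"
    using V.maximal_independent_subset[of U] by blast
  have spanB: "V.span B = U" using B V.span_minimal[OF B(1) sub] by blast
  have "x \<notin> V.span B" using spanB x by simp
  then have ind: "V.independent (insert x B)" using V.independent_insertI B(2) by blast
  obtain \<phi> where lin: "Vector_Spaces.linear mp_smult (*) \<phi>"
     and ph: "\<forall>y\<in>insert x B. \<phi> y = (if y = x then 1 else 0)"
    using VP.linear_independent_extend[OF ind, of "\<lambda>y. if y = x then 1 else 0"] by blast
  interpret L: Vector_Spaces.linear "mp_smult :: 'k \<Rightarrow> 'k mpoly \<Rightarrow> 'k mpoly" "(*) :: 'k \<Rightarrow> 'k \<Rightarrow> 'k" \<phi> by (rule lin)
  have xB: "x \<notin> B" using B(1) x by blast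
  have "\<forall>y\<in>B. \<phi> y = 0" using ph xB by auto
  then have "\<forall>u\<in>U. \<phi> u = 0" using VP.linear_eq_0_on_span[OF lin] spanB by blast
  moreover have "\<phi> x = 1" using ph by simp
  ultimately show ?thesis using L.add L.scale by blast
qed

lemma lin_zero: "(\<forall>c a. \<phi> (mp_smult c a) = c * \<phi> a) \<Longrightarrow> \<phi> (0::'k::field mpoly) = 0"
  by (metis mp_smult_zero mult_zero_left)

lemma lin_sum:
  assumes add: "\<forall>a b. \<phi> (a + b) = \<phi> a + \<phi> b" and z: "\<phi> (0::'k::field mpoly) = 0"
  shows "\<phi> (\<Sum>i\<in>I. f i) = (\<Sum>i\<in>I. \<phi> (f i))"
proof (induction I rule: infinite_finite_induct)
  case (infinite A) then show ?case using z by simp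
next
  case empty then show ?case using z by simp
next
  case (insert x F) then show ?case using add by simp
qed

definition mons :: "nat \<Rightarrow> nat \<Rightarrow> (nat \<Rightarrow>\<^sub>0 nat) set" where
  "mons n e = {a. Poly_Mapping.keys a \<subseteq> {..<n} \<and> mono_deg a = e}"

lemma lookup_le_mono_deg: "Poly_Mapping.lookup a i \<le> mono_deg a"
proof (cases "i \<in> Poly_Mapping.keys a")
  case True
  then have "mono_deg a = Poly_Mapping.lookup a i + (\<Sum>j\<in>Poly_Mapping.keys a - {i}. Poly_Mapping.lookup a j)"
    unfolding mono_deg_def by (simp add: sum.remove)
  then show ?thesis by simp
next
  case False then show ?thesis by (simp add: in_keys_iff)
qed

lemma finite_mons: "finite (mons n e)"
proof -
  have "Poly_Mapping.lookup ` mons n e \<subseteq> {f. \<forall>x. (x \<in> {..<n} \<longrightarrow> f x \<in> {..e}) \<and> (x \<notin> {..<n} \<longrightarrow> f x = 0)}"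
  proof
    fix f assume "f \<in> Poly_Mapping.lookup ` mons n e"
    then obtain a where a: "a \<in> mons n e" and f: "f = Poly_Mapping.lookup a" by blast
    then have k: "Poly_Mapping.keys a \<subseteq> {..<n}" and dg: "mono_deg a = e" by (auto simp: mons_def)
    show "f \<in> {f. \<forall>x. (x \<in> {..<n} \<longrightarrow> f x \<in> {..e}) \<and> (x \<notin> {..<n} \<longrightarrow> f x = 0)}"
      using lookup_le_mono_deg[of a] dg k f by (auto simp: in_keys_iff)
  qed
  then have "finite (Poly_Mapping.lookup ` mons n e)"
    by (rule finite_subset) (intro finite_set_of_finite_funs; simp)
  moreover have "inj_on Poly_Mapping.lookup (mons n e)"
    by (auto intro: inj_onI poly_mapping_eqI)
  ultimately show ?thesis by (rule finite_imageD)
qed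

definition rep :: "nat \<Rightarrow> nat \<Rightarrow> ('k::field mpoly \<Rightarrow> 'k) \<Rightarrow> 'k mpoly" where
  "rep n e \<phi> = (\<Sum>a\<in>mons n e. Poly_Mapping.single a (\<phi> (Poly_Mapping.single a 1) / of_nat (bf n a)))"

lemma lookup_rep: "Poly_Mapping.lookup (rep n e \<phi>) b = (if b \<in> mons n e then \<phi> (Poly_Mapping.single b 1) / of_nat (bf n b) else 0)"
  by (simp add: rep_def lookup_sum lookup_single when_def finite_mons)

lemma rep_homog: "rep n e \<phi> \<in> homog n e"
  by (rule homogI) (auto simp: in_keys_iff lookup_rep mons_def split: if_splits)

lemma P_rep:
  fixes \<phi> :: "'k::field mpoly \<Rightarrow> 'k"
  assumes add: "\<forall>a b. \<phi> (a + b) = \<phi> a + \<phi> b" and sm: "\<forall>c a. \<phi> (mp_smult c a) = c * \<phi> a"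
    and H: "H \<in> homog n e" and nz: "\<forall>b\<in>mons n e. (of_nat (bf n b) :: 'k) \<noteq> 0"
  shows "P n H (rep n e \<phi>) = \<phi> H"
proof -
  have Hm: "b \<in> mons n e" if "b \<in> Poly_Mapping.keys H" for b using homogD[OF H that] by (simp add: mons_def)
  have "H = (\<Sum>b\<in>Poly_Mapping.keys H. mp_smult (Poly_Mapping.lookup H b) (Poly_Mapping.single b 1))"
    by (simp add: mp_smult_single sum_singles)
  then have "\<phi> H = (\<Sum>b\<in>Poly_Mapping.keys H. \<phi> (mp_smult (Poly_Mapping.lookup H b) (Poly_Mapping.single b 1)))"
    using lin_sum[OF add lin_zero[OF sm]] by metis
  also have "\<dots> = (\<Sum>b\<in>Poly_Mapping.keys H. Poly_Mapping.lookup H b * of_nat (bf n b) * Poly_Mapping.lookup (rep n e \<phi>) b)"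
    by (rule sum.cong) (use Hm nz sm in \<open>auto simp: lookup_rep\<close>)
  finally show ?thesis by (simp add: P_def)
qed

lemma prod_fact_dvd: "finite A \<Longrightarrow> (\<Prod>i\<in>A. fact (f i) :: nat) dvd fact (\<Sum>i\<in>A. f i)"
proof (induction A rule: finite_induct)
  case empty then show ?case by simp
next
  case (insert x F)
  have "fact (f x) * (\<Prod>i\<in>F. fact (f i)) dvd (fact (f x) * fact (\<Sum>i\<in>F. f i) :: nat)"
    using insert.IH by (simp add: mult_dvd_mono)
  also have "\<dots> dvd fact (f x + (\<Sum>i\<in>F. f i))" by (rule fact_fact_dvd_fact)
  finally show ?case using insert.hyps by simp
qed

lemma bf_nz:
  assumes ch: "\<not> CHAR('k::field) dvd fact (d + 1)" and k: "Poly_Mapping.keys b \<subseteq> {..<n}" and dg: "mono_deg b \<le> d + 1"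
  shows "(of_nat (bf n b) :: 'k) \<noteq> 0"
proof
  assume "(of_nat (bf n b) :: 'k) = 0"
  then have "CHAR('k) dvd bf n b" by (simp add: of_nat_eq_0_iff_char_dvd)
  moreover have "bf n b dvd fact (mono_deg b)"
    unfolding bf_def mono_deg_sum[OF finite_lessThan k] by (rule prod_fact_dvd) simp
  moreover have "fact (mono_deg b) dvd (fact (d + 1) :: nat)" using dg by (rule fact_dvd)
  ultimately show False using ch by (meson dvd_trans)
qed

lemma polyring_add: "H1 \<in> polyring n \<Longrightarrow> H2 \<in> polyring n \<Longrightarrow> H1 + H2 \<in> polyring n"
  using keys_add[of H1 H2] by (auto simp: polyring_def)

lemma polyring_smult: "H \<in> polyring n \<Longrightarrow> mp_smult c H \<in> polyring n"
  using keys_mp_smult[of c H] by (auto simp: polyring_def)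

lemma apolar_add_left:
  fixes p :: "'a::comm_semiring_1 mpoly"
  assumes "H1 \<in> polyring n" "H2 \<in> polyring n"
  shows "apolar n (H1 + H2) p = apolar n H1 p + apolar n H2 p"
proof (rule poly_mapping_eqI)
  fix g
  let ?A = "Poly_Mapping.keys H1 \<union> Poly_Mapping.keys H2"
  have fin: "finite ?A" by simp
  have s1: "Poly_Mapping.keys H1 \<subseteq> ?A" and s2: "Poly_Mapping.keys H2 \<subseteq> ?A" and s3: "Poly_Mapping.keys (H1 + H2) \<subseteq> ?A"
    using keys_add[of H1 H2] by auto
  show "Poly_Mapping.lookup (apolar n (H1 + H2) p) g = Poly_Mapping.lookup (apolar n H1 p + apolar n H2 p) g"
    using lookup_apolar[OF polyring_add[OF assms] fin s3] lookup_apolar[OF assms(1) fin s1]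
      lookup_apolar[OF assms(2) fin s2]
    by (simp add: lookup_add distrib_right sum.distrib)
qed

lemma apolar_smult_left:
  fixes p :: "'a::comm_semiring_1 mpoly"
  assumes "H \<in> polyring n"
  shows "apolar n (mp_smult c H) p = mp_smult c (apolar n H p)"
proof (rule poly_mapping_eqI)
  fix g
  show "Poly_Mapping.lookup (apolar n (mp_smult c H) p) g = Poly_Mapping.lookup (mp_smult c (apolar n H p)) g"
    using lookup_apolar[OF polyring_smult[OF assms] finite_keys keys_mp_smult[of c H]] lookup_apolar[OF assms finite_keys subset_refl]
    by (simp add: lookup_mp_smult sum_distrib_left ac_simps)
qed

lemma apolar_zero_left: "apolar n 0 p = 0"
  by (simp add: apolar_def)

lemma zero_polyring: "0 \<in> polyring n"
  by (simp add: polyring_def)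

lemma sum_closed: "0 \<in> Y \<Longrightarrow> (\<And>a b. a \<in> Y \<Longrightarrow> b \<in> Y \<Longrightarrow> a + b \<in> Y) \<Longrightarrow> (\<And>i. i \<in> A \<Longrightarrow> f i \<in> Y) \<Longrightarrow> sum f A \<in> Y"
  by (induction A rule: infinite_finite_induct) auto

lemma grad_span_0: "0 \<in> grad_span n (f::'a::comm_semiring_1 mpoly)"
proof -
  have "(\<Sum>i<n. mp_smult 0 (pderiv_mp i f)) = 0" by (simp add: mp_smult_zero)
  then show ?thesis unfolding grad_span_def by (auto intro!: exI[of _ "\<lambda>_. 0"])
qed

lemma grad_span_add: "a \<in> grad_span n f \<Longrightarrow> b \<in> grad_span n f \<Longrightarrow> a + b \<in> grad_span n (f::'a::comm_semiring_1 mpoly)"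
proof -
  assume "a \<in> grad_span n f" "b \<in> grad_span n f"
  then obtain c c' where "a = (\<Sum>i<n. mp_smult (c i) (pderiv_mp i f))" "b = (\<Sum>i<n. mp_smult (c' i) (pderiv_mp i f))"
    by (auto simp: grad_span_def)
  then have "a + b = (\<Sum>i<n. mp_smult (c i + c' i) (pderiv_mp i f))"
    by (simp add: mp_smult_add_left sum.distrib)
  then show ?thesis unfolding grad_span_def by (auto intro!: exI[of _ "\<lambda>i. c i + c' i"])
qed

lemma grad_span_smult: "a \<in> grad_span n f \<Longrightarrow> mp_smult k a \<in> grad_span n (f::'a::comm_semiring_1 mpoly)"
proof -
  assume "a \<in> grad_span n f"
  then obtain c where "a = (\<Sum>i<n. mp_smult (c i) (pderiv_mp i f))"
    by (auto simp: grad_span_def)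
  moreover have "mp_smult k (\<Sum>i<n. mp_smult (c i) (pderiv_mp i f)) = (\<Sum>i<n. mp_smult (k * c i) (pderiv_mp i f))"
    by (induction n) (simp_all add: mp_smult_zero_right mp_smult_add_right mp_smult_smult)
  ultimately show ?thesis unfolding grad_span_def by auto
qed

lemma grad_span_pderiv: "i < n \<Longrightarrow> pderiv_mp i f \<in> grad_span n (f::'a::comm_semiring_1 mpoly)"
proof -
  assume i: "i < n"
  have "(\<Sum>j<n. mp_smult (if j = i then 1 else 0) (pderiv_mp j f)) = (\<Sum>j<n. if j = i then pderiv_mp j f else 0)"
    by (rule sum.cong) (simp_all add: mp_smult_one mp_smult_zero)
  also have "\<dots> = pderiv_mp i f" using i by simp
  finally have eq: "(\<Sum>j<n. mp_smult (if j = i then 1 else 0) (pderiv_mp j f)) = pderiv_mp i f" .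
  show ?thesis unfolding grad_span_def
    by (rule CollectI, rule exI[of _ "\<lambda>j. if j = i then 1 else 0"]) (simp add: eq)
qed



theorem proposition3p9:
  fixes f :: "'k::alg_closed_field mpoly" and n d :: nat
  assumes "\<not> CHAR('k) dvd fact (d + 1)"
    and "f \<in> homog n (d + 1)"
  shows "has_min_gen_in_degree n (apolar_ideal n f) (d + 1) \<longleftrightarrow>
    (\<exists>g \<in> homog n (d + 1). (\<nexists>c. g = mp_smult c f) \<and> grad_span n g \<subseteq> grad_span n f)"
proof -
  note ch = assms(1) and fh = assms(2)
  define I where "I = apolar_ideal n f"
  define U where "U = max_ideal_times n I"
  have fpoly: "f \<in> polyring n" using fh by (rule homog_polyring)
  have nz: "\<forall>b\<in>mons n e. (of_nat (bf n b) :: 'k) \<noteq> 0" if "e \<le> d + 1" for e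
    using bf_nz[OF ch] that by (auto simp: mons_def)
  have nzd1: "\<forall>b\<in>mons n (d+1). (of_nat (bf n b) :: 'k) \<noteq> 0" and nzd: "\<forall>b\<in>mons n d. (of_nat (bf n b) :: 'k) \<noteq> 0"
    using nz[of d] nz[of "d+1"] by auto
  have Ipoly: "F \<in> polyring n" and Iap: "apolar n F f = 0" if "F \<in> I" for F
    using that by (auto simp: I_def apolar_ideal_def)
  have II: "F \<in> I" if "F \<in> polyring n" "apolar n F f = 0" for F
    using that by (auto simp: I_def apolar_ideal_def)
  have I0: "0 \<in> I" by (rule II) (simp_all add: zero_polyring apolar_zero_left)
  have Iadd: "F1 + F2 \<in> I" if "F1 \<in> I" "F2 \<in> I" for F1 F2
    using that by (intro II) (simp_all add: polyring_add Ipoly Iap apolar_add_left)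
  have Ism: "mp_smult c F \<in> I" if "F \<in> I" for c F
    using that by (intro II) (simp_all add: polyring_smult Ipoly Iap apolar_smult_left mp_smult_zero_right)
  have U0: "0 \<in> U"
  proof -
    have "(\<Sum>i<n. var i * (0::'k mpoly)) = 0" by simp
    then show ?thesis unfolding U_def max_ideal_times_def using I0 by (auto intro!: exI[of _ "\<lambda>_. 0"])
  qed
  have Uadd: "a + b \<in> U" if "a \<in> U" "b \<in> U" for a b
  proof -
    from that obtain G G' where a: "a = (\<Sum>i<n. var i * G i)" "\<forall>i<n. G i \<in> I"
      and b: "b = (\<Sum>i<n. var i * G' i)" "\<forall>i<n. G' i \<in> I"
      unfolding U_def max_ideal_times_def by blast
    have "a + b = (\<Sum>i<n. var i * (G i + G' i))" using a b by (simp add: distrib_left sum.distrib)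
    moreover have "\<forall>i<n. G i + G' i \<in> I" using a b Iadd by blast
    ultimately show ?thesis unfolding U_def max_ideal_times_def
      by (intro CollectI exI[of _ "\<lambda>i. G i + G' i"] conjI) simp_all
  qed
  have Usm: "mp_smult c a \<in> U" if "a \<in> U" for c a
  proof -
    from that obtain G where a: "a = (\<Sum>i<n. var i * G i)" "\<forall>i<n. G i \<in> I"
      unfolding U_def max_ideal_times_def by blast
    have "mp_smult c a = (\<Sum>i<n. var i * mp_smult c (G i))"
      using a by (simp add: mp_smult_def sum_distrib_left mult.left_commute)
    moreover have "\<forall>i<n. mp_smult c (G i) \<in> I" using a Ism by blast
    ultimately show ?thesis unfolding U_def max_ideal_times_def
      by (intro CollectI exI[of _ "\<lambda>i. mp_smult c (G i)"] conjI) simp_all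
  qed
  have Uvar: "var i * G \<in> U" if "G \<in> I" "i < n" for G i
  proof -
    have "(\<Sum>j<n. var j * (if j = i then G else 0)) = (\<Sum>j<n. if j = i then var j * G else 0)"
      by (rule sum.cong) simp_all
    also have "\<dots> = var i * G" using that by simp
    finally have "var i * G = (\<Sum>j<n. var j * (if j = i then G else 0))" ..
    moreover have "\<forall>j<n. (if j = i then G else 0) \<in> I" using that I0 by auto
    ultimately show ?thesis unfolding U_def max_ideal_times_def
      by (intro CollectI exI[of _ "\<lambda>j. if j = i then G else 0"] conjI) simp_all
  qed
  have Ygrad: "x \<in> grad_span n f" if "\<forall>i<n. pderiv_mp i g \<in> grad_span n f" "x \<in> grad_span n g" for g x
  proof -
    from that(2) obtain c where x: "x = (\<Sum>i<n. mp_smult (c i) (pderiv_mp i g))"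
      by (auto simp: grad_span_def)
    show ?thesis unfolding x
      by (rule sum_closed) (use that(1) in \<open>auto intro: grad_span_0 grad_span_add grad_span_smult\<close>)
  qed
  show ?thesis
  proof
    assume "has_min_gen_in_degree n (apolar_ideal n f) (d + 1)"
    then obtain F where FI: "F \<in> I" and Fh: "F \<in> homog n (d + 1)" and FU: "F \<notin> U"
      unfolding has_min_gen_in_degree_def I_def U_def by blast
    obtain \<phi> :: "'k mpoly \<Rightarrow> 'k" where padd: "\<forall>a b. \<phi> (a + b) = \<phi> a + \<phi> b"
      and psm: "\<forall>c a. \<phi> (mp_smult c a) = c * \<phi> a" and pU: "\<forall>u\<in>U. \<phi> u = 0" and pF: "\<phi> F = 1"
      using sep[of U F, OF U0 Uadd Usm FU] by blast
    define g where "g = rep n (d + 1) \<phi>"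
    have gh: "g \<in> homog n (d + 1)" unfolding g_def by (rule rep_homog)
    have PFg: "P n F g = 1" unfolding g_def using P_rep[OF padd psm Fh nzd1] pF by simp
    have PFf: "P n F f = 0" using lookup_apolar_zero[OF Ipoly[OF FI], of f] Iap[OF FI] by simp
    have notmult: "\<nexists>c. g = mp_smult c f"
    proof
      assume "\<exists>c. g = mp_smult c f"
      then obtain c where "g = mp_smult c f" by blast
      then have "P n F g = 0" using PFf by (simp add: P_smult_right)
      with PFg show False by simp
    qed
    have dg: "pderiv_mp i g \<in> grad_span n f" if i: "i < n" for i
    proof (rule ccontr)
      assume nin: "pderiv_mp i g \<notin> grad_span n f"
      obtain \<psi> :: "'k mpoly \<Rightarrow> 'k" where qadd: "\<forall>a b. \<psi> (a + b) = \<psi> a + \<psi> b"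
        and qsm: "\<forall>c a. \<psi> (mp_smult c a) = c * \<psi> a" and qY: "\<forall>u\<in>grad_span n f. \<psi> u = 0"
        and qh: "\<psi> (pderiv_mp i g) = 1"
        using sep[of "grad_span n f" "pderiv_mp i g", OF grad_span_0 grad_span_add grad_span_smult nin] by blast
      define G where "G = rep n d \<psi>"
      have Gh: "G \<in> homog n d" unfolding G_def by (rule rep_homog)
      have dfh: "pderiv_mp j f \<in> homog n d" for j using fh by (intro pderiv_homog) simp
      have dgh: "pderiv_mp i g \<in> homog n d" using gh by (intro pderiv_homog) simp
      have "apolar n G f = 0"
      proof (rule poly_mapping_eqI)
        fix \<gamma>
        show "Poly_Mapping.lookup (apolar n G f) \<gamma> = Poly_Mapping.lookup 0 \<gamma>"
        proof (rule ccontr)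
          assume ne: "Poly_Mapping.lookup (apolar n G f) \<gamma> \<noteq> Poly_Mapping.lookup 0 \<gamma>"
          then have "mono_deg \<gamma> = 1 \<and> Poly_Mapping.keys \<gamma> \<subseteq> {..<n}"
            using apolar_supp[OF Gh fh] by simp
          then obtain j where j: "j < n" and gj: "\<gamma> = Poly_Mapping.single j 1"
            using mono_deg_one by blast
          have "Poly_Mapping.lookup (apolar n G f) \<gamma> = P n G (pderiv_mp j f)"
            unfolding gj by (rule lookup_apolar_single[OF homog_polyring[OF Gh] j])
          also have "\<dots> = \<psi> (pderiv_mp j f)"
            unfolding G_def P_sym[of n "rep n d \<psi>"] by (rule P_rep[OF qadd qsm dfh nzd])
          also have "\<dots> = 0" using qY grad_span_pderiv[OF j] by blast
          finally show False using ne by simp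
        qed
      qed
      then have GI: "G \<in> I" by (intro II homog_polyring[OF Gh])
      have "\<phi> (var i * G) = 0" using pU Uvar[OF GI i] by blast
      moreover have "\<phi> (var i * G) = 1"
      proof -
        have "\<phi> (var i * G) = P n (var i * G) g"
          unfolding g_def using var_homog[OF Gh i] by (intro P_rep[OF padd psm, symmetric] nzd1) simp_all
        also have "\<dots> = P n G (pderiv_mp i g)" by (rule P_var[OF i])
        also have "\<dots> = \<psi> (pderiv_mp i g)"
          unfolding G_def P_sym[of n "rep n d \<psi>"] by (rule P_rep[OF qadd qsm dgh nzd])
        finally show ?thesis using qh by simp
      qed
      ultimately show False by simp
    qed
    have "grad_span n g \<subseteq> grad_span n f" using Ygrad dg by blast
    then show "\<exists>g \<in> homog n (d + 1). (\<nexists>c. g = mp_smult c f) \<and> grad_span n g \<subseteq> grad_span n f"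
      using gh notmult by blast
  next
    assume "\<exists>g \<in> homog n (d + 1). (\<nexists>c. g = mp_smult c f) \<and> grad_span n g \<subseteq> grad_span n f"
    then obtain g where gh: "g \<in> homog n (d + 1)" and notmult: "\<nexists>c. g = mp_smult c f"
      and gs: "grad_span n g \<subseteq> grad_span n f" by blast
    have dg: "pderiv_mp i g \<in> grad_span n f" if "i < n" for i
      using gs grad_span_pderiv[OF that] by blast
    let ?S = "range (\<lambda>c. mp_smult c f)"
    have S0: "0 \<in> ?S" by (auto intro!: image_eqI[of _ _ 0] simp: mp_smult_zero)
    have Sadd: "a + b \<in> ?S" if "a \<in> ?S" "b \<in> ?S" for a b
      using that by (auto simp: mp_smult_add_left[symmetric])
    have Ssm: "mp_smult c a \<in> ?S" if "a \<in> ?S" for c a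
      using that by (auto simp: mp_smult_smult)
    have gS: "g \<notin> ?S" using notmult by auto
    obtain \<phi> :: "'k mpoly \<Rightarrow> 'k" where padd: "\<forall>a b. \<phi> (a + b) = \<phi> a + \<phi> b"
      and psm: "\<forall>c a. \<phi> (mp_smult c a) = c * \<phi> a" and pS: "\<forall>u\<in>?S. \<phi> u = 0" and pg: "\<phi> g = 1"
      using sep[of ?S g, OF S0 Sadd Ssm gS] by blast
    define F where "F = rep n (d + 1) \<phi>"
    have Fh: "F \<in> homog n (d + 1)" unfolding F_def by (rule rep_homog)
    have PFf: "P n F f = 0"
    proof -
      have "P n F f = \<phi> f" unfolding F_def P_sym[of n "rep n (d+1) \<phi>"] by (rule P_rep[OF padd psm fh nzd1])
      also have "\<phi> f = 0" using pS mp_smult_one[of f] by (metis rangeI)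
      finally show ?thesis .
    qed
    have PFg: "P n F g = 1"
      unfolding F_def P_sym[of n "rep n (d+1) \<phi>"] using P_rep[OF padd psm gh nzd1] pg by simp
    have "apolar n F f = 0"
    proof (rule poly_mapping_eqI)
      fix \<gamma>
      show "Poly_Mapping.lookup (apolar n F f) \<gamma> = Poly_Mapping.lookup 0 \<gamma>"
      proof (rule ccontr)
        assume ne: "Poly_Mapping.lookup (apolar n F f) \<gamma> \<noteq> Poly_Mapping.lookup 0 \<gamma>"
        have fh': "f \<in> homog n (d + 1 + 0)" using fh by simp
        have "mono_deg \<gamma> = 0" using apolar_supp[OF Fh fh'] ne by simp
        then have g0: "\<gamma> = 0" by (rule mono_deg_zero)
        have "Poly_Mapping.lookup (apolar n F f) \<gamma> = P n F f"
          unfolding g0 by (rule lookup_apolar_zero[OF homog_polyring[OF Fh]])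
        then show False using ne PFf by simp
      qed
    qed
    then have FI: "F \<in> I" by (intro II homog_polyring[OF Fh])
    have FU: "F \<notin> U"
    proof
      assume "F \<in> U"
      then obtain G where F: "F = (\<Sum>i<n. var i * G i)" and GI: "\<forall>i<n. G i \<in> I"
        unfolding U_def max_ideal_times_def by blast
      have "P n F g = (\<Sum>i<n. P n (var i * G i) g)" unfolding F by (simp add: P_sum_left)
      also have "\<dots> = (\<Sum>i<n. P n (G i) (pderiv_mp i g))" by (rule sum.cong) (simp_all add: P_var)
      also have "\<dots> = 0"
      proof (rule sum.neutral, rule ballI)
        fix i assume "i \<in> {..<n}"
        then have i: "i < n" by simp
        from dg[OF i] obtain c where c: "pderiv_mp i g = (\<Sum>j<n. mp_smult (c j) (pderiv_mp j f))"
          by (auto simp: grad_span_def)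
        have "P n (G i) (pderiv_mp i g) = (\<Sum>j<n. c j * P n (G i) (pderiv_mp j f))"
          unfolding c by (simp add: P_sum_right P_smult_right)
        also have "\<dots> = (\<Sum>j<n. c j * Poly_Mapping.lookup (apolar n (G i) f) (Poly_Mapping.single j 1))"
        proof (rule sum.cong)
          fix j assume "j \<in> {..<n}"
          then have j: "j < n" by simp
          show "c j * P n (G i) (pderiv_mp j f) = c j * Poly_Mapping.lookup (apolar n (G i) f) (Poly_Mapping.single j 1)"
            using lookup_apolar_single[OF Ipoly[OF GI[rule_format, OF i]] j, of f] by simp
        qed simp
        also have "\<dots> = 0" using Iap[OF GI[rule_format, OF i]] by simp
        finally show "P n (G i) (pderiv_mp i g) = 0" .
      qed
      finally show False using PFg by simp
    qed
    show "has_min_gen_in_degree n (apolar_ideal n f) (d + 1)"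
      unfolding has_min_gen_in_degree_def using FI Fh FU by (auto simp: I_def U_def)
  qed
qed

end
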